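(* Let $(U_i,U_i^0)$, $i\in[m]$, be real random variables and $\mathcal{H}_0\subset[m]$ a set of null indices. Define $G_i=\mathrm{sign}(U_i^0-U_i)\cdot[\exp(-U_i)\vee\exp(-U_i^0)]$, the threshold $$\tau=\inf\Big\{\lambda\in\{|G_i|\}_{i=1}^m:\frac{1+\sum_{i=1}^m\mathbb{I}(G_i\le-\lambda)}{\sum_{i=1}^m\mathbb{I}(G_i\ge\lambda)}\le\alpha\Big\}$$ ($\tau=\infty$ if empty) for a given $\alpha\in(0,1)$, and $e_i=\frac{m\,\mathbb{I}(G_i\ge\tau)}{1+\sum_{j=1}^m\mathbb{I}(G_j\le-\tau)}$. Let $p_i^{U,U^0}(u,v)$ be the conditional density (or mass function) of $(U_i,U_i^0)$ at $(u,v)$ given $(\mathbf{U}_{-i},\mathbf{U}^0_{-i})$, and $p_i^{U^0,U}(u,v)$ that of $(U_i^0,U_i)$ at $(u,v)$ given $(\mathbf{U}_{-i},\mathbf{U}^0_{-i})$, and define the observed KL divergence $\widehat{\mathrm{KL}}_i=\log\{p_i^{U,U^0}(U_i,U_i^0)/p_i^{U^0,U}(U_i,U_i^0)\}$. Then (a) $\mathbb{E}\big[\sum_{i\in\mathcal{H}_0}e_i\big]\le\inf_{\epsilon\ge0}\big\{m\big[e^{\epsilon}+\sum_{i\in\mathcal{H}_0}\mathbb{P}(\widehat{\mathrm{KL}}_i>\epsilon)\big]\big\}$; (b) if the $e$-BH procedure is applied to $e_1,\dots,e_m$ at level $\alpha$, i.e. rejecting $\{i:e_i\ge e_{(\hat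 k)}\}$ with $e_{(1)}\ge\dots\ge e_{(m)}$ and $\hat k=\max\{i:ie_{(i)}/m\ge1/\alpha\}$, its false discovery rate satisfies $\mathrm{FDR}\le\inf_{\epsilon\ge0}\big\{\alpha\big[e^{\epsilon}+\sum_{i\in\mathcal{H}_0}\mathbb{P}(\widehat{\mathrm{KL}}_i>\epsilon)\big]\big\}$.
   Context: For a rejection set $\mathcal{R}$, $\mathrm{FDR}=\mathbb{E}\big[|\mathcal{R}\cap\mathcal{H}_0|/\max\{|\mathcal{R}|,1\}\big]$. $\mathbf{U}_{-i}=(U_k:k\ne i)$, $\mathbf{U}^0_{-i}=(U^0_k:k\ne i)$. *)

theory Defs
  imports "HOL-Probability.Probability"
begin

text \<open>Indices are 1..m. An observation is a family x with x i = (U_i, U^0_i).\<close>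

definition statG :: "real \<Rightarrow> real \<Rightarrow> real" where
  "statG u u0 = sgn (u0 - u) * max (exp (- u)) (exp (- u0))"

text \<open>The ratio condition (1 + #neg)/(#pos) \<le> alpha is written multiplied out,
  so that a zero denominator means ratio = infinity (never \<le> alpha).\<close>
definition tau_set :: "nat \<Rightarrow> real \<Rightarrow> (nat \<Rightarrow> real) \<Rightarrow> real set" where
  "tau_set m \<alpha> G = {t \<in> (\<lambda>i. \<bar>G i\<bar>) ` {1..m}.
      1 + real (card {i \<in> {1..m}. G i \<le> - t}) \<le> \<alpha> * real (card {i \<in> {1..m}. G i \<ge> t})}"

definition tau :: "nat \<Rightarrow> real \<Rightarrow> (nat \<Rightarrow> real) \<Rightarrow> ereal" where
  "tau m \<alpha> G = (if tau_set m \<alpha> G = {} then \<infinity> else ereal (Inf (tau_set m \<alpha> G)))"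

definition evalue :: "nat \<Rightarrow> real \<Rightarrow> (nat \<Rightarrow> real) \<Rightarrow> nat \<Rightarrow> real" where
  "evalue m \<alpha> G i =
     real m * (if ereal (G i) \<ge> tau m \<alpha> G then 1 else 0)
     / (1 + real (card {j \<in> {1..m}. ereal (G j) \<le> - tau m \<alpha> G}))"

definition eord :: "nat \<Rightarrow> (nat \<Rightarrow> real) \<Rightarrow> nat \<Rightarrow> real" where
  "eord m e k = rev (sort (map e [1..<m+1])) ! (k - 1)"

definition eBH_khat_set :: "nat \<Rightarrow> real \<Rightarrow> (nat \<Rightarrow> real) \<Rightarrow> nat set" where
  "eBH_khat_set m \<alpha> e = {k \<in> {1..m}. real k * eord m e k / real m \<ge> 1 / \<alpha>}"

definition eBH :: "nat \<Rightarrow> real \<Rightarrow> (nat \<Rightarrow> real) \<Rightarrow> nat set" where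
  "eBH m \<alpha> e = (if eBH_khat_set m \<alpha> e = {} then {}
     else {i \<in> {1..m}. e i \<ge> eord m e (Max (eBH_khat_set m \<alpha> e))})"

text \<open>Conditional density of the i-th coordinate pair at z given the other coordinates
  of x, computed from a joint density g w.r.t. the product of copies of nu \<Otimes> nu.\<close>
definition cdens :: "real measure \<Rightarrow> ((nat \<Rightarrow> real \<times> real) \<Rightarrow> real) \<Rightarrow> nat
                      \<Rightarrow> (nat \<Rightarrow> real \<times> real) \<Rightarrow> real \<times> real \<Rightarrow> real" where
  "cdens \<nu> g i x z = g (x(i := z)) / (\<integral>w. g (x(i := w)) \<partial>(\<nu> \<Otimes>\<^sub>M \<nu>))"

definition swap_at :: "nat \<Rightarrow> (nat \<Rightarrow> real \<times> real) \<Rightarrow> (nat \<Rightarrow> real \<times> real)" where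
  "swap_at i x = x(i := prod.swap (x i))"

text \<open>log(p/q) in the extended reals (log(p/0) = +inf for p > 0, log 0 = -inf, 0/0 read as 0).\<close>
definition logratio :: "real \<Rightarrow> real \<Rightarrow> ereal" where
  "logratio p q = (if p > 0 \<and> q > 0 then ereal (ln (p / q))
                   else if p > 0 then \<infinity> else if q > 0 then - \<infinity> else 0)"

text \<open>Observed KL: p^{U,U0}_i(U_i,U0_i) / p^{U0,U}_i(U_i,U0_i); the density of the family with
  i-th pair swapped is g \<circ> swap_at i.\<close>
definition obsKL :: "real measure \<Rightarrow> ((nat \<Rightarrow> real \<times> real) \<Rightarrow> real) \<Rightarrow> nat
                      \<Rightarrow> (nat \<Rightarrow> real \<times> real) \<Rightarrow> ereal" where
  "obsKL \<nu> f i x = logratio (cdens \<nu> f i x (x i)) (cdens \<nu> (f \<circ> swap_at i) i x (x i))"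

end

theory Submission
  imports Defs
begin

definition Tl :: "nat \<Rightarrow> real \<Rightarrow> (nat \<Rightarrow> real) \<Rightarrow> nat \<Rightarrow> ereal" where
  "Tl m \<alpha> G i = tau m \<alpha> (G(i := \<bar>G i\<bar>))"

definition Aq :: "nat \<Rightarrow> real \<Rightarrow> (nat \<Rightarrow> real) \<Rightarrow> nat \<Rightarrow> real" where
  "Aq m \<alpha> G i = (if ereal (G i) \<ge> Tl m \<alpha> G i then 1 else 0)
     / (1 + real (card {j \<in> {1..m} - {i}. ereal (G j) \<le> - Tl m \<alpha> G i}))"

definition Bq :: "nat \<Rightarrow> real \<Rightarrow> (nat \<Rightarrow> real) \<Rightarrow> nat \<Rightarrow> real" where
  "Bq m \<alpha> G i = (if ereal (G i) \<le> - Tl m \<alpha> G i then 1 else 0)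
     / (1 + real (card {j \<in> {1..m} - {i}. ereal (G j) \<le> - Tl m \<alpha> G i}))"

lemma tau_set_finite: "finite (tau_set m \<alpha> G)"
  unfolding tau_set_def by auto

lemma tau_finite:
  assumes "tau m \<alpha> G = ereal t"
  shows "t \<in> tau_set m \<alpha> G" "t \<ge> 0"
proof -
  have ne: "tau_set m \<alpha> G \<noteq> {}" using assms unfolding tau_def by (auto split: if_splits)
  have t: "t = Inf (tau_set m \<alpha> G)" using assms ne unfolding tau_def by auto
  show tin: "t \<in> tau_set m \<alpha> G" using t ne tau_set_finite by (simp add: cInf_eq_Min)
  then show "t \<ge> 0" unfolding tau_set_def by auto
qed

lemma tau_lower:
  assumes "t \<in> tau_set m \<alpha> G" shows "tau m \<alpha> G \<le> ereal t"
proof -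
  have "tau_set m \<alpha> G \<noteq> {}" using assms by auto
  then show ?thesis using assms tau_set_finite unfolding tau_def
    by (auto intro!: cInf_lower bdd_below_finite)
qed

lemma tau_nonneg: "tau m \<alpha> G \<ge> 0"
proof (cases "tau m \<alpha> G")
  case (real r) then show ?thesis using tau_finite(2)[OF real] by auto
next
  case PInf then show ?thesis by auto
next
  case MInf then show ?thesis unfolding tau_def by (auto split: if_splits)
qed

lemma tau_cong:
  assumes "\<And>j. j \<in> {1..m} \<Longrightarrow> G j = G' j"
  shows "tau m \<alpha> G = tau m \<alpha> G'"
proof -
  have "tau_set m \<alpha> G = tau_set m \<alpha> G'"
    unfolding tau_set_def using assms
    by (smt (verit, best) Collect_cong image_cong mem_Collect_eq)
  then show ?thesis unfolding tau_def by simp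
qed

lemma evalue_le_Aq:
  assumes "i \<in> {1..m}"
  shows "evalue m \<alpha> G i \<le> real m * Aq m \<alpha> G i"
proof (cases "ereal (G i) \<ge> tau m \<alpha> G")
  case False
  then show ?thesis unfolding evalue_def Aq_def by auto
next
  case True
  then obtain t where t: "tau m \<alpha> G = ereal t" using tau_nonneg
    by (cases "tau m \<alpha> G") auto
  have "t \<ge> 0" using tau_finite(2)[OF t] .
  then have "G i \<ge> 0" using True t by auto
  then have GG: "G(i := \<bar>G i\<bar>) = G" by auto
  have T: "Tl m \<alpha> G i = tau m \<alpha> G" unfolding Tl_def GG ..
  let ?A = "{j \<in> {1..m}. ereal (G j) \<le> - tau m \<alpha> G}"
  let ?A' = "{j \<in> {1..m} - {i}. ereal (G j) \<le> - tau m \<alpha> G}"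
  have "card ?A' \<le> card ?A" by (intro card_mono) auto
  then have "real m / (1 + real (card ?A)) \<le> real m / (1 + real (card ?A'))"
    by (intro divide_left_mono) auto
  then show ?thesis unfolding evalue_def Aq_def T using True by auto
qed

lemma Aq_swap: "Aq m \<alpha> G i = Bq m \<alpha> (G(i := - G i)) i"
proof -
  have T: "Tl m \<alpha> (G(i := - G i)) i = Tl m \<alpha> G i" unfolding Tl_def by simp
  have S: "{j \<in> {1..m} - {i}. ereal ((G(i := - G i)) j) \<le> - Tl m \<alpha> G i}
         = {j \<in> {1..m} - {i}. ereal (G j) \<le> - Tl m \<alpha> G i}" by auto
  have "(ereal (- G i) \<le> - Tl m \<alpha> G i) = (Tl m \<alpha> G i \<le> ereal (G i))"
    by (metis ereal_minus_le_minus ereal_uminus_uminus uminus_ereal.simps(1))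
  then show ?thesis unfolding Aq_def Bq_def T S by simp
qed

lemma Aq_nonneg: "Aq m \<alpha> G i \<ge> 0" unfolding Aq_def by auto
lemma Aq_le1: "Aq m \<alpha> G i \<le> 1" unfolding Aq_def by auto
lemma Bq_nonneg: "Bq m \<alpha> G i \<ge> 0" unfolding Bq_def by auto

lemma Tl_eq_aux:
  assumes i: "i \<in> {1..m}" and k: "k \<in> {1..m}" and a: "\<alpha> > 0"
    and ti: "Tl m \<alpha> G i = ereal ti" and tk: "Tl m \<alpha> G k = ereal tk" and lt: "ti < tk"
    and Gi: "G i \<le> - ti" and Gk: "G k \<le> - tk"
  shows False
proof -
  define Hi where "Hi = G(i := \<bar>G i\<bar>)"
  define Hk where "Hk = G(k := \<bar>G k\<bar>)"
  have ik: "i \<noteq> k" using ti tk lt by auto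
  have tiC: "ti \<in> tau_set m \<alpha> Hi" and ti0: "ti \<ge> 0"
    using tau_finite[of m \<alpha> Hi ti] ti unfolding Tl_def Hi_def by auto
  have Gkneg: "G k < 0" using Gk lt ti0 by auto
  define \<sigma> where "\<sigma> = (\<lambda>j::nat. if j = i then k else if j = k then i else j)"
  have inj: "inj_on \<sigma> X" for X unfolding \<sigma>_def inj_on_def by auto
  let ?PA = "{j \<in> {1..m}. Hi j \<ge> ti}"
  let ?PB = "{j \<in> {1..m}. Hk j \<ge> ti}"
  have "\<sigma> ` ?PA \<subseteq> ?PB"
  proof
    fix y assume "y \<in> \<sigma> ` ?PA"
    then obtain j where j: "j \<in> ?PA" "y = \<sigma> j" by auto
    show "y \<in> ?PB"
    proof (cases "j = i")
      case True then show ?thesis using j k ik Gkneg Gk lt unfolding \<sigma>_def Hk_def by auto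
    next
      case False
      then show ?thesis using j ik Gkneg ti0 unfolding \<sigma>_def Hk_def Hi_def
        by (auto split: if_splits)
    qed
  qed
  then have cP: "card ?PA \<le> card ?PB" by (intro card_inj_on_le[OF inj]) auto
  let ?NA = "{j \<in> {1..m}. Hk j \<le> - ti}"
  let ?NB = "{j \<in> {1..m}. Hi j \<le> - ti}"
  have "\<sigma> ` ?NA \<subseteq> ?NB"
  proof
    fix y assume "y \<in> \<sigma> ` ?NA"
    then obtain j where j: "j \<in> ?NA" "y = \<sigma> j" by auto
    show "y \<in> ?NB"
    proof (cases "j = i")
      case True then show ?thesis using j k ik Gk lt unfolding \<sigma>_def Hi_def Hk_def by auto
    next
      case False
      then show ?thesis using j ik Gkneg ti0 unfolding \<sigma>_def Hk_def Hi_def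
        by (auto split: if_splits)
    qed
  qed
  then have cN: "card ?NA \<le> card ?NB" by (intro card_inj_on_le[OF inj]) auto
  have img: "(\<lambda>j. \<bar>Hk j\<bar>) ` {1..m} = (\<lambda>j. \<bar>Hi j\<bar>) ` {1..m}"
    unfolding Hi_def Hk_def by (intro image_cong) auto
  have "ti \<in> tau_set m \<alpha> Hk"
  proof -
    have "1 + real (card ?NA) \<le> 1 + real (card ?NB)" using cN by auto
    also have "\<dots> \<le> \<alpha> * real (card ?PA)" using tiC unfolding tau_set_def by auto
    also have "\<dots> \<le> \<alpha> * real (card ?PB)" using cP a by auto
    finally show ?thesis using tiC img unfolding tau_set_def by auto
  qed
  then have "tau m \<alpha> Hk \<le> ereal ti" by (rule tau_lower)
  then show False using tk lt unfolding Tl_def Hk_def by auto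
qed

lemma Tl_eq:
  assumes i: "i \<in> {1..m}" and k: "k \<in> {1..m}" and a: "\<alpha> > 0"
    and Gi: "ereal (G i) \<le> - Tl m \<alpha> G i" and Gk: "ereal (G k) \<le> - Tl m \<alpha> G k"
  shows "Tl m \<alpha> G i = Tl m \<alpha> G k"
proof -
  obtain ti where ti: "Tl m \<alpha> G i = ereal ti"
    using Gi tau_nonneg[of m \<alpha> "G(i := \<bar>G i\<bar>)"] unfolding Tl_def by (cases "Tl m \<alpha> G i") (auto simp: Tl_def)
  obtain tk where tk: "Tl m \<alpha> G k = ereal tk"
    using Gk tau_nonneg[of m \<alpha> "G(k := \<bar>G k\<bar>)"] unfolding Tl_def by (cases "Tl m \<alpha> G k") (auto simp: Tl_def)
  have "\<not> ti < tk" using Tl_eq_aux[OF i k a ti tk] Gi Gk ti tk by auto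
  moreover have "\<not> tk < ti" using Tl_eq_aux[OF k i a tk ti] Gi Gk ti tk by auto
  ultimately show ?thesis using ti tk by auto
qed

lemma sum_Bq:
  assumes a: "\<alpha> > 0"
  shows "(\<Sum>i\<in>{1..m}. Bq m \<alpha> G i) \<le> 1"
proof -
  define J where "J = {i \<in> {1..m}. ereal (G i) \<le> - Tl m \<alpha> G i}"
  have "(\<Sum>i\<in>{1..m}. Bq m \<alpha> G i) = (\<Sum>i\<in>J. Bq m \<alpha> G i)"
    unfolding J_def by (intro sum.mono_neutral_right) (auto simp: Bq_def)
  also have "\<dots> \<le> 1"
  proof (cases "J = {}")
    case True then show ?thesis by simp
  next
    case False
    then obtain i0 where i0: "i0 \<in> J" by auto
    define T where "T = Tl m \<alpha> G i0"
    have TJ: "Tl m \<alpha> G i = T" if "i \<in> J" for i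
      using Tl_eq[of i m i0 \<alpha> G] that i0 a unfolding J_def T_def by auto
    define K where "K = {j \<in> {1..m}. ereal (G j) \<le> - T}"
    have JK: "J \<subseteq> K" using TJ unfolding J_def K_def by auto
    have fK: "finite K" unfolding K_def by auto
    have "Bq m \<alpha> G i = 1 / real (card K)" if "i \<in> J" for i
    proof -
      have iK: "i \<in> K" using that JK by auto
      have "{j \<in> {1..m} - {i}. ereal (G j) \<le> - Tl m \<alpha> G i} = K - {i}"
        using TJ[OF that] unfolding K_def by auto
      moreover have "card (K - {i}) + 1 = card K" using iK fK
        by (metis card_Suc_Diff1 Suc_eq_plus1)
      ultimately show ?thesis using that TJ[OF that] unfolding Bq_def J_def
        by (auto simp: add.commute)
    qed
    then have "(\<Sum>i\<in>J. Bq m \<alpha> G i) = real (card J) / real (card K)" by simp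
    also have "\<dots> \<le> 1"
    proof -
      have "card J \<le> card K" using JK fK card_mono by blast
      moreover have "card K > 0" using JK i0 fK card_gt_0_iff by blast
      ultimately show ?thesis by auto
    qed
    finally show ?thesis .
  qed
  finally show ?thesis .
qed

lemma statG_swap: "statG v u = - statG u v"
  unfolding statG_def
  by (subst minus_diff_eq[symmetric, of v u]) (simp only: sgn_minus mult_minus_left max.commute)
definition Gof :: "(nat \<Rightarrow> real \<times> real) \<Rightarrow> nat \<Rightarrow> real" where
  "Gof x j = statG (fst (x j)) (snd (x j))"
lemma Gof_swap: "Gof (swap_at i x) = (Gof x)(i := - Gof x i)"
  unfolding Gof_def swap_at_def by (rule ext) (simp add: statG_swap[of "fst (x i)"])
lemma swap_swap: "swap_at i (swap_at i x) = x"
  unfolding swap_at_def by (rule ext) simp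
locale kset =
  fixes \<nu> :: "real measure" and m :: nat and f :: "(nat \<Rightarrow> real \<times> real) \<Rightarrow> real"
  assumes sf: "sigma_finite_measure \<nu>"
    and nu_sets[measurable_cong]: "sets \<nu> = sets borel"
    and f0: "\<And>x. f x \<ge> 0"
    and fm[measurable]: "f \<in> borel_measurable (PiM {1..m} (\<lambda>_. \<nu> \<Otimes>\<^sub>M \<nu>))"
begin

abbreviation "NN \<equiv> \<nu> \<Otimes>\<^sub>M \<nu>"
abbreviation "PP \<equiv> PiM {1..m} (\<lambda>_. NN)"

lemma pair_sf: "pair_sigma_finite \<nu> \<nu>"
  using sf by (simp add: pair_sigma_finite_def)

lemma NN_sf: "sigma_finite_measure NN"
proof -
  interpret pair_sigma_finite \<nu> \<nu> by (rule pair_sf)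
  show ?thesis by (rule P.sigma_finite_measure_axioms)
qed

lemma prod_sf: "product_sigma_finite (\<lambda>_::nat. NN)"
  using NN_sf by (simp add: product_sigma_finite_def)

lemma swapNN: "prod.swap \<in> measurable NN NN"
proof -
  have "(\<lambda>(x, y). (y, x)) \<in> measurable NN NN" by (rule measurable_pair_swap')
  moreover have "(\<lambda>(x, y). (y, x)) = (prod.swap :: real \<times> real \<Rightarrow> _)" by auto
  ultimately show ?thesis by simp
qed

lemma upd_meas:
  assumes i: "i \<in> {1..m}"
  shows "(\<lambda>(x, w). x(i := w)) \<in> measurable (PP \<Otimes>\<^sub>M NN) PP"
proof -
  have "(\<lambda>p. (fst p)(i := snd p)) \<in> measurable (PP \<Otimes>\<^sub>M NN) PP"
  proof (rule measurable_PiM_single'[where f="\<lambda>j p. ((fst p)(i := snd p)) j"])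
    fix j assume j: "j \<in> {1..m}"
    show "(\<lambda>p. ((fst p)(i := snd p)) j) \<in> measurable (PP \<Otimes>\<^sub>M NN) NN"
    proof (cases "j = i")
      case True then show ?thesis by simp
    next
      case False
      then show ?thesis using j by simp
    qed
  next
    show "(\<lambda>p j. ((fst p)(i := snd p)) j) \<in> space (PP \<Otimes>\<^sub>M NN) \<rightarrow> (\<Pi>\<^sub>E j\<in>{1..m}. space NN)"
      using i by (auto simp: space_pair_measure space_PiM PiE_def Pi_def extensional_def)
  qed
  moreover have "(\<lambda>(x, w). x(i := w)) = (\<lambda>p. (fst p)(i := snd p))" by auto
  ultimately show ?thesis by simp
qed

lemma swap_meas:
  assumes i: "i \<in> {1..m}"
  shows "swap_at i \<in> measurable PP PP"
proof -
  have "(\<lambda>x j. swap_at i x j) \<in> measurable PP PP"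
  proof (rule measurable_PiM_single'[where f="\<lambda>j x. swap_at i x j"])
    fix j assume j: "j \<in> {1..m}"
    show "(\<lambda>x. swap_at i x j) \<in> measurable PP NN"
    proof (cases "j = i")
      case True
      have "(\<lambda>x. prod.swap (x i)) \<in> measurable PP NN"
        using measurable_comp[OF measurable_component_singleton[OF i] swapNN] by (simp add: comp_def)
      then show ?thesis using True by (simp add: swap_at_def)
    next
      case False
      then show ?thesis using j by (simp add: swap_at_def)
    qed
  next
    show "(\<lambda>x j. swap_at i x j) \<in> space PP \<rightarrow> (\<Pi>\<^sub>E j\<in>{1..m}. space NN)"
      using i by (auto simp: swap_at_def space_pair_measure space_PiM PiE_def Pi_def extensional_def)
  qed
  then show ?thesis by simp
qed

lemma decomp:
  assumes i: "i \<in> {1..m}" and g: "g \<in> borel_measurable PP"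
  shows "integral\<^sup>N PP g = (\<integral>\<^sup>+ y. (\<integral>\<^sup>+ w. g (y(i := w)) \<partial>NN) \<partial>(PiM ({1..m} - {i}) (\<lambda>_. NN)))"
proof -
  interpret product_sigma_finite "\<lambda>_::nat. NN" by (rule prod_sf)
  have S: "{1..m} = insert i ({1..m} - {i})" using i by auto
  show ?thesis
    apply (subst S)
    apply (rule product_nn_integral_insert)
    using g S by auto
qed

lemma swap_inv:
  assumes i: "i \<in> {1..m}" and g: "g \<in> borel_measurable PP"
  shows "(\<integral>\<^sup>+ x. g (swap_at i x) \<partial>PP) = integral\<^sup>N PP g"
proof -
  interpret pair_sigma_finite \<nu> \<nu> by (rule pair_sf)
  have gs: "(\<lambda>x. g (swap_at i x)) \<in> borel_measurable PP"
    using measurable_comp[OF swap_meas[OF i] g] by (simp add: comp_def)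
  have inner: "(\<integral>\<^sup>+ w. g (swap_at i (y(i := w))) \<partial>NN) = (\<integral>\<^sup>+ w. g (y(i := w)) \<partial>NN)"
    if y: "y \<in> space (PiM ({1..m} - {i}) (\<lambda>_. NN))" for y
  proof -
    have S: "{1..m} = insert i ({1..m} - {i})" using i by auto
    have um: "(\<lambda>w. y(i := w)) \<in> measurable NN PP"
      using measurable_component_update[OF y, of i] S by auto
    have gm: "(\<lambda>w. g (y(i := w))) \<in> borel_measurable NN"
      using measurable_comp[OF um g] by (simp add: comp_def)
    have e: "swap_at i (y(i := w)) = y(i := prod.swap w)" for w
      unfolding swap_at_def by auto
    have "(\<integral>\<^sup>+ w. g (y(i := w)) \<partial>NN) = (\<integral>\<^sup>+ w. g (y(i := w)) \<partial>distr NN NN (\<lambda>(x, y). (y, x)))"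
      by (subst distr_pair_swap[symmetric]) simp
    also have "\<dots> = (\<integral>\<^sup>+ w. g (y(i := (case w of (a, b) \<Rightarrow> (b, a)))) \<partial>NN)"
      by (subst nn_integral_distr) (auto simp: gm)
    finally show ?thesis unfolding e by (simp add: prod.swap_def case_prod_beta)
  qed
  show ?thesis
    apply (subst decomp[OF i gs])
    apply (subst decomp[OF i g])
    apply (rule nn_integral_cong)
    using inner by simp
qed


lemma upd_meas2:
  assumes i: "i \<in> {1..m}"
  shows "(\<lambda>(x, w). x(i := w)) \<in> measurable (PiM ({1..m} - {i}) (\<lambda>_. NN) \<Otimes>\<^sub>M NN) PP"
proof -
  have "(\<lambda>p. (fst p)(i := snd p)) \<in> measurable (PiM ({1..m} - {i}) (\<lambda>_. NN) \<Otimes>\<^sub>M NN) PP"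
  proof (rule measurable_PiM_single'[where f="\<lambda>j p. ((fst p)(i := snd p)) j"])
    fix j assume j: "j \<in> {1..m}"
    show "(\<lambda>p. ((fst p)(i := snd p)) j) \<in> measurable (PiM ({1..m} - {i}) (\<lambda>_. NN) \<Otimes>\<^sub>M NN) NN"
    proof (cases "j = i")
      case True then show ?thesis by simp
    next
      case False
      then show ?thesis using j by simp
    qed
  next
    show "(\<lambda>p j. ((fst p)(i := snd p)) j) \<in> space (PiM ({1..m} - {i}) (\<lambda>_. NN) \<Otimes>\<^sub>M NN) \<rightarrow> (\<Pi>\<^sub>E j\<in>{1..m}. space NN)"
      using i by (auto simp: space_pair_measure space_PiM PiE_def Pi_def extensional_def)
  qed
  moreover have "(\<lambda>(x, w). x(i := w)) = (\<lambda>p. (fst p)(i := snd p))" by auto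
  ultimately show ?thesis by simp
qed

lemma fupd_meas:
  assumes i: "i \<in> {1..m}" and g: "g \<in> borel_measurable PP"
  shows "(\<lambda>(x, w). g (x(i := w))) \<in> borel_measurable (PP \<Otimes>\<^sub>M NN)"
  using measurable_comp[OF upd_meas[OF i] g] by (simp add: comp_def case_prod_beta)

lemma fupd_meas2:
  assumes i: "i \<in> {1..m}" and g: "g \<in> borel_measurable PP"
  shows "(\<lambda>(x, w). g (x(i := w))) \<in> borel_measurable (PiM ({1..m} - {i}) (\<lambda>_. NN) \<Otimes>\<^sub>M NN)"
  using measurable_comp[OF upd_meas2[OF i] g] by (simp add: comp_def case_prod_beta)

lemma fupd_meas1:
  assumes i: "i \<in> {1..m}" and g: "g \<in> borel_measurable PP" and x: "x \<in> space PP"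
  shows "(\<lambda>w. g (x(i := w))) \<in> borel_measurable NN"
  using measurable_comp[OF measurable_Pair1'[OF x] fupd_meas[OF i g]] by (simp add: comp_def)

lemma nnZ_meas:
  fixes g :: "_ \<Rightarrow> ennreal"
  assumes i: "i \<in> {1..m}" and g: "g \<in> borel_measurable PP"
  shows "(\<lambda>x. \<integral>\<^sup>+ w. g (x(i := w)) \<partial>NN) \<in> borel_measurable PP"
proof -
  interpret s: sigma_finite_measure NN by (rule NN_sf)
  show ?thesis using s.borel_measurable_nn_integral[OF fupd_meas[OF i g]] by simp
qed

lemma Z_meas:
  fixes g :: "_ \<Rightarrow> real"
  assumes i: "i \<in> {1..m}" and g: "g \<in> borel_measurable PP"
  shows "(\<lambda>x. \<integral> w. g (x(i := w)) \<partial>NN) \<in> borel_measurable PP"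
proof -
  interpret s: sigma_finite_measure NN by (rule NN_sf)
  show ?thesis using s.borel_measurable_lebesgue_integral[OF fupd_meas[OF i g]] by simp
qed

lemma bad_null:
  assumes i: "i \<in> {1..m}" and fin: "(\<integral>\<^sup>+ x. ennreal (f x) \<partial>PP) \<noteq> \<infinity>"
  defines "B \<equiv> {x \<in> space PP. (\<integral>\<^sup>+ w. ennreal (f (x(i := w))) \<partial>NN) = 0
                 \<or> (\<integral>\<^sup>+ w. ennreal (f (x(i := w))) \<partial>NN) = \<infinity>}"
  shows "(\<integral>\<^sup>+ x. ennreal (f x) * indicator B x \<partial>PP) = 0"
proof -
  let ?PI = "PiM ({1..m} - {i}) (\<lambda>_. NN)"
  have efm: "(\<lambda>x. ennreal (f x)) \<in> borel_measurable PP"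
    using measurable_compose[OF fm measurable_ennreal] .
  have Zm: "(\<lambda>x. \<integral>\<^sup>+ w. ennreal (f (x(i := w))) \<partial>NN) \<in> borel_measurable PP"
    by (rule nnZ_meas[OF i efm])
  have Bs: "B \<in> sets PP" unfolding B_def using Zm by measurable
  have hm: "(\<lambda>x. ennreal (f x) * indicator B x) \<in> borel_measurable PP"
    using Bs by measurable
  have Zm2: "(\<lambda>y. \<integral>\<^sup>+ w. ennreal (f (y(i := w))) \<partial>NN) \<in> borel_measurable ?PI"
  proof -
    interpret s: sigma_finite_measure NN by (rule NN_sf)
    show ?thesis using s.borel_measurable_nn_integral[OF fupd_meas2[OF i efm]] by simp
  qed
  have "(\<integral>\<^sup>+ y. (\<integral>\<^sup>+ w. ennreal (f (y(i := w))) \<partial>NN) \<partial>?PI) \<noteq> \<infinity>"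
    using fin decomp[OF i efm] by simp
  then have AEfin: "AE y in ?PI. (\<integral>\<^sup>+ w. ennreal (f (y(i := w))) \<partial>NN) \<noteq> \<infinity>"
    by (rule nn_integral_PInf_AE[OF Zm2])
  have "(\<integral>\<^sup>+ x. ennreal (f x) * indicator B x \<partial>PP)
      = (\<integral>\<^sup>+ y. (\<integral>\<^sup>+ w. ennreal (f (y(i := w))) * indicator B (y(i := w)) \<partial>NN) \<partial>?PI)"
    by (rule decomp[OF i hm])
  also have "\<dots> = (\<integral>\<^sup>+ y. 0 \<partial>?PI)"
  proof (rule nn_integral_cong_AE)
    show "AE y in ?PI. (\<integral>\<^sup>+ w. ennreal (f (y(i := w))) * indicator B (y(i := w)) \<partial>NN) = 0"
      using AEfin AE_space
    proof eventually_elim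
      case (elim y)
      show ?case
      proof -
        note True = elim(2)
        have S: "{1..m} = insert i ({1..m} - {i})" using i by auto
        have inP: "y(i := w) \<in> space PP" if "w \<in> space NN" for w
          using measurable_space[OF measurable_component_update[OF True, of i] that] S by auto
        let ?c = "(\<integral>\<^sup>+ w. ennreal (f (y(i := w))) \<partial>NN)"
        have ind: "indicator B (y(i := w)) = (indicator {z. ?c = 0 \<or> ?c = \<infinity>} y :: ennreal)"
          if "w \<in> space NN" for w
          using inP[OF that] unfolding B_def by (simp add: indicator_def)
        have um0: "(\<lambda>w. y(i := w)) \<in> measurable NN PP"
          using measurable_component_update[OF True, of i] S by auto
        have um: "(\<lambda>w. ennreal (f (y(i := w)))) \<in> borel_measurable NN"
          using measurable_comp[OF um0 efm] by (simp add: comp_def)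
        have "(\<integral>\<^sup>+ w. ennreal (f (y(i := w))) * indicator B (y(i := w)) \<partial>NN)
            = (\<integral>\<^sup>+ w. ennreal (f (y(i := w))) * indicator {z. ?c = 0 \<or> ?c = \<infinity>} y \<partial>NN)"
          by (rule nn_integral_cong) (simp add: ind)
        also have "\<dots> = ?c * indicator {z. ?c = 0 \<or> ?c = \<infinity>} y"
          by (rule nn_integral_multc[OF um])
        also have "\<dots> = 0" using elim(1) by (auto simp: indicator_def)
        finally show ?thesis .
      qed
    qed
  qed
  finally show ?thesis by simp
qed


lemma good_props:
  assumes i: "i \<in> {1..m}" and x: "x \<in> space PP"
    and nz: "(\<integral>\<^sup>+ w. ennreal (f (x(i := w))) \<partial>NN) \<noteq> 0"
    and ni: "(\<integral>\<^sup>+ w. ennreal (f (x(i := w))) \<partial>NN) \<noteq> \<infinity>"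
  shows "(\<integral> w. f (x(i := w)) \<partial>NN) > 0"
    and "(\<integral> w. f (swap_at i (x(i := w))) \<partial>NN) = (\<integral> w. f (x(i := w)) \<partial>NN)"
proof -
  interpret pair_sigma_finite \<nu> \<nu> by (rule pair_sf)
  have gm: "(\<lambda>w. f (x(i := w))) \<in> borel_measurable NN" by (rule fupd_meas1[OF i fm x])
  have nrm: "(\<integral>\<^sup>+ w. ennreal (norm (f (x(i := w)))) \<partial>NN) = (\<integral>\<^sup>+ w. ennreal (f (x(i := w))) \<partial>NN)"
    using f0 by simp
  have int: "integrable NN (\<lambda>w. f (x(i := w)))"
    by (rule integrableI_bounded[OF gm]) (use ni nrm in \<open>simp add: less_top\<close>)
  have eq: "(\<integral>\<^sup>+ w. ennreal (f (x(i := w))) \<partial>NN) = ennreal (\<integral> w. f (x(i := w)) \<partial>NN)"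
    by (rule nn_integral_eq_integral[OF int]) (simp add: f0)
  show "(\<integral> w. f (x(i := w)) \<partial>NN) > 0"
    using nz unfolding eq by (simp only: ennreal_eq_0_iff not_le)
  have e: "swap_at i (x(i := w)) = x(i := prod.swap w)" for w
    unfolding swap_at_def by auto
  have sw: "(\<lambda>(x, y). (y, x)) = (prod.swap :: real \<times> real \<Rightarrow> _)" by auto
  have "(\<integral> w. f (x(i := w)) \<partial>NN) = (\<integral> w. f (x(i := w)) \<partial>distr NN NN (\<lambda>(x, y). (y, x)))"
    by (subst distr_pair_swap[symmetric]) (rule refl)
  also have "\<dots> = (\<integral> w. f (x(i := prod.swap w)) \<partial>NN)"
    unfolding sw by (rule integral_distr[OF swapNN gm])
  finally show "(\<integral> w. f (swap_at i (x(i := w))) \<partial>NN) = (\<integral> w. f (x(i := w)) \<partial>NN)"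
    unfolding e by simp
qed

lemma obsKL_good:
  assumes i: "i \<in> {1..m}" and x: "x \<in> space PP"
    and nz: "(\<integral>\<^sup>+ w. ennreal (f (x(i := w))) \<partial>NN) \<noteq> 0"
    and ni: "(\<integral>\<^sup>+ w. ennreal (f (x(i := w))) \<partial>NN) \<noteq> \<infinity>"
    and eps: "\<epsilon> \<ge> 0" and kl: "obsKL \<nu> f i x \<le> ereal \<epsilon>"
  shows "f x \<le> exp \<epsilon> * f (swap_at i x)"
proof -
  define Z where "Z = (\<integral> w. f (x(i := w)) \<partial>NN)"
  have Z: "Z > 0" unfolding Z_def by (rule good_props(1)[OF i x nz ni])
  have Z': "(\<integral> w. f (swap_at i (x(i := w))) \<partial>NN) = Z"
    unfolding Z_def by (rule good_props(2)[OF i x nz ni])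
  define p where "p = f x / Z"
  define q where "q = f (swap_at i x) / Z"
  have c1: "cdens \<nu> f i x (x i) = p" unfolding cdens_def p_def Z_def by simp
  have c2: "cdens \<nu> (f \<circ> swap_at i) i x (x i) = q"
    unfolding cdens_def q_def comp_def Z'[symmetric] by simp
  have ok: "obsKL \<nu> f i x = logratio p q"
    unfolding obsKL_def c1 c2 ..
  have q0: "q \<ge> 0" unfolding q_def using f0 Z by simp
  show ?thesis
  proof (cases "p > 0")
    case False
    have "f x \<le> 0"
    proof (rule ccontr)
      assume "\<not> f x \<le> 0"
      then have "p > 0" unfolding p_def using Z by simp
      with False show False by simp
    qed
    moreover have "0 \<le> exp \<epsilon> * f (swap_at i x)" using f0[of "swap_at i x"] by simp
    ultimately show ?thesis by linarith
  next
    case True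
    show ?thesis
    proof (cases "q > 0")
      case False
      then have "logratio p q = \<infinity>" using True unfolding logratio_def by simp
      then show ?thesis using kl unfolding ok by simp
    next
      case qp: True
      have "logratio p q = ereal (ln (p / q))" using True qp unfolding logratio_def by simp
      then have "ln (p / q) \<le> \<epsilon>" using kl unfolding ok by simp
      moreover have "p / q = exp (ln (p / q))" using True qp by simp
      ultimately have "p / q \<le> exp \<epsilon>" by (metis exp_le_cancel_iff)
      then have "p \<le> exp \<epsilon> * q" using qp by (simp add: divide_le_eq)
      then show ?thesis unfolding p_def q_def using Z by (simp add: divide_le_eq)
    qed
  qed
qed

lemma logratio_meas:
  fixes p q :: "'a \<Rightarrow> real"
  assumes [measurable]: "p \<in> borel_measurable M" "q \<in> borel_measurable M"
  shows "(\<lambda>x. logratio (p x) (q x)) \<in> borel_measurable M"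
  unfolding logratio_def by measurable

lemma obsKL_meas:
  assumes i: "i \<in> {1..m}"
  shows "obsKL \<nu> f i \<in> borel_measurable PP"
proof -
  have fs: "(\<lambda>x. f (swap_at i x)) \<in> borel_measurable PP"
    using measurable_comp[OF swap_meas[OF i] fm] by (simp add: comp_def)
  have Z1: "(\<lambda>x. \<integral> w. f (x(i := w)) \<partial>NN) \<in> borel_measurable PP"
    by (rule Z_meas[OF i fm])
  have Z2: "(\<lambda>x. \<integral> w. f (swap_at i (x(i := w))) \<partial>NN) \<in> borel_measurable PP"
    using Z_meas[OF i fs] .
  have eq: "obsKL \<nu> f i = (\<lambda>x. logratio (f x / (\<integral> w. f (x(i := w)) \<partial>NN))
              (f (swap_at i x) / (\<integral> w. f (swap_at i (x(i := w))) \<partial>NN)))"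
    unfolding obsKL_def cdens_def by (simp add: comp_def fun_eq_iff)
  show ?thesis unfolding eq
    by (intro logratio_meas borel_measurable_divide fm fs Z1 Z2)
qed

end

lemma tau_INF:
  "tau m \<alpha> G = (INF j\<in>{1..m}. if 1 + real (card {k \<in> {1..m}. G k \<le> - \<bar>G j\<bar>})
        \<le> \<alpha> * real (card {k \<in> {1..m}. G k \<ge> \<bar>G j\<bar>}) then ereal \<bar>G j\<bar> else \<infinity>)"
  (is "_ = (INF j\<in>_. ?F j)")
proof -
  let ?C = "tau_set m \<alpha> G"
  have mem: "(\<bar>G j\<bar> \<in> ?C) = (1 + real (card {k \<in> {1..m}. G k \<le> - \<bar>G j\<bar>})
        \<le> \<alpha> * real (card {k \<in> {1..m}. G k \<ge> \<bar>G j\<bar>}))" if "j \<in> {1..m}" for j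
    using that unfolding tau_set_def by auto
  show ?thesis
  proof (cases "?C = {}")
    case True
    then have Finf: "?F j = \<infinity>" if "j \<in> {1..m}" for j using mem[OF that] by auto
    have "\<infinity> \<le> (INF j\<in>{1..m}. ?F j)" by (rule INF_greatest) (simp only: Finf order_refl)
    then show ?thesis using True unfolding tau_def by auto
  next
    case False
    have fin: "finite ?C" by (rule tau_set_finite)
    have inC: "Inf ?C \<in> ?C" using False fin by (simp add: cInf_eq_Min)
    then obtain j0 where j0: "j0 \<in> {1..m}" "Inf ?C = \<bar>G j0\<bar>" unfolding tau_set_def by auto
    have F0: "?F j0 = ereal (Inf ?C)" using mem[OF j0(1)] inC j0 by auto
    have le1: "(INF j\<in>{1..m}. ?F j) \<le> ereal (Inf ?C)"
      using INF_lower[of j0 "{1..m}" ?F] F0 j0(1) by simp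
    have le2: "ereal (Inf ?C) \<le> (INF j\<in>{1..m}. ?F j)"
    proof (rule INF_greatest)
      fix j assume j: "j \<in> {1..m}"
      show "ereal (Inf ?C) \<le> ?F j"
      proof (cases "\<bar>G j\<bar> \<in> ?C")
        case True
        then have "Inf ?C \<le> \<bar>G j\<bar>" using fin by (intro cInf_lower bdd_below_finite) auto
        then show ?thesis using True mem[OF j] by auto
      next
        case False then show ?thesis using mem[OF j] by auto
      qed
    qed
    show ?thesis using le1 le2 False unfolding tau_def by auto
  qed
qed

lemma card_sum: "finite A \<Longrightarrow> real (card {k \<in> A. P k}) = (\<Sum>k\<in>A. if P k then 1 else 0)"
  by (simp add: sum.If_cases Int_def)

lemma tau_meas:
  assumes H[measurable]: "\<And>j. (\<lambda>x. H x j) \<in> borel_measurable M"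
  shows "(\<lambda>x. tau m \<alpha> (H x)) \<in> borel_measurable M"
proof -
  have p1: "Measurable.pred M (\<lambda>x. H x k \<le> - \<bar>H x j\<bar>)" for j k by measurable
  have p2: "Measurable.pred M (\<lambda>x. \<bar>H x j\<bar> \<le> H x k)" for j k by measurable
  have c1: "(\<lambda>x. real (card {k \<in> {1..m}. H x k \<le> - \<bar>H x j\<bar>})) \<in> borel_measurable M" for j
    unfolding card_sum[OF finite_atLeastAtMost]
    by (intro borel_measurable_sum measurable_If measurable_const) (simp_all add: p1[unfolded pred_def])
  have c2: "(\<lambda>x. real (card {k \<in> {1..m}. \<bar>H x j\<bar> \<le> H x k})) \<in> borel_measurable M" for j
    unfolding card_sum[OF finite_atLeastAtMost]
    by (intro borel_measurable_sum measurable_If measurable_const) (simp_all add: p2[unfolded pred_def])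
  have p3: "Measurable.pred M (\<lambda>x. 1 + real (card {k \<in> {1..m}. H x k \<le> - \<bar>H x j\<bar>})
        \<le> \<alpha> * real (card {k \<in> {1..m}. \<bar>H x j\<bar> \<le> H x k}))" for j
    using c1[of j] c2[of j] by measurable
  have e: "(\<lambda>x. ereal \<bar>H x j\<bar>) \<in> borel_measurable M" for j by measurable
  show ?thesis
    unfolding tau_INF
    by (intro borel_measurable_INF countable_finite finite_atLeastAtMost measurable_If e measurable_const)
      (simp_all add: p3[unfolded pred_def])
qed


lemma Tl_meas:
  assumes H[measurable]: "\<And>j. (\<lambda>x. H x j) \<in> borel_measurable M"
  shows "(\<lambda>x. Tl m \<alpha> (H x) i) \<in> borel_measurable M"
  unfolding Tl_def
proof (rule tau_meas)
  fix j
  show "(\<lambda>x. ((H x)(i := \<bar>H x i\<bar>)) j) \<in> borel_measurable M"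
    by (cases "j = i") simp_all
qed

lemma AqBq_meas:
  assumes H[measurable]: "\<And>j. (\<lambda>x. H x j) \<in> borel_measurable M"
  shows "(\<lambda>x. Aq m \<alpha> (H x) i) \<in> borel_measurable M" "(\<lambda>x. Bq m \<alpha> (H x) i) \<in> borel_measurable M"
proof -
  note T[measurable] = Tl_meas[OF H, where m=m and \<alpha>=\<alpha> and i=i]
  have p1: "Measurable.pred M (\<lambda>x. ereal (H x j) \<le> - Tl m \<alpha> (H x) i)" for j by measurable
  have p2: "Measurable.pred M (\<lambda>x. Tl m \<alpha> (H x) i \<le> ereal (H x i))" by measurable
  have p3: "Measurable.pred M (\<lambda>x. ereal (H x i) \<le> - Tl m \<alpha> (H x) i)" by measurable
  have fin: "finite ({1..m} - {i})" by simp
  have c1: "(\<lambda>x. real (card {j \<in> {1..m} - {i}. ereal (H x j) \<le> - Tl m \<alpha> (H x) i})) \<in> borel_measurable M"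
    unfolding card_sum[OF fin]
    by (intro borel_measurable_sum measurable_If measurable_const) (simp_all add: p1[unfolded pred_def])
  have i1: "(\<lambda>x. if Tl m \<alpha> (H x) i \<le> ereal (H x i) then 1 else 0 :: real) \<in> borel_measurable M"
    by (intro measurable_If measurable_const) (simp_all add: p2[unfolded pred_def])
  have i2: "(\<lambda>x. if ereal (H x i) \<le> - Tl m \<alpha> (H x) i then 1 else 0 :: real) \<in> borel_measurable M"
    by (intro measurable_If measurable_const) (simp_all add: p3[unfolded pred_def])
  show "(\<lambda>x. Aq m \<alpha> (H x) i) \<in> borel_measurable M"
    unfolding Aq_def by (intro borel_measurable_divide borel_measurable_add i1 c1 measurable_const) simp
  show "(\<lambda>x. Bq m \<alpha> (H x) i) \<in> borel_measurable M"
    unfolding Bq_def by (intro borel_measurable_divide borel_measurable_add i2 c1 measurable_const) simp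
qed

lemma Gof_meas:
  assumes nu_sets[measurable_cong]: "sets \<nu> = sets borel" and j: "j \<in> {1..m}"
  shows "(\<lambda>x. Gof x j) \<in> borel_measurable (PiM {1..m} (\<lambda>_. \<nu> \<Otimes>\<^sub>M \<nu>))"
  unfolding Gof_def statG_def using j by measurable


lemma Gof_meas_all:
  assumes nu_sets[measurable_cong]: "sets \<nu> = sets borel"
  shows "(\<lambda>x. Gof x j) \<in> borel_measurable (PiM {1..m} (\<lambda>_. \<nu> \<Otimes>\<^sub>M \<nu>))"
proof (cases "j \<in> {1..m}")
  case True then show ?thesis using Gof_meas[OF nu_sets] by blast
next
  case False
  have "(\<lambda>x. Gof x j) \<in> borel_measurable (PiM {1..m} (\<lambda>_. \<nu> \<Otimes>\<^sub>M \<nu>))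
      \<longleftrightarrow> (\<lambda>x. Gof (\<lambda>_. undefined) j) \<in> borel_measurable (PiM {1..m} (\<lambda>_. \<nu> \<Otimes>\<^sub>M \<nu>))"
    by (rule measurable_cong) (use False in \<open>auto simp: space_PiM PiE_def extensional_def Gof_def\<close>)
  then show ?thesis by simp
qed

context kset begin

lemma main_P:
  fixes \<alpha> \<epsilon> :: real
  assumes i: "i \<in> {1..m}" and eps: "\<epsilon> \<ge> 0" and fin: "(\<integral>\<^sup>+ x. ennreal (f x) \<partial>PP) \<noteq> \<infinity>"
  defines "a \<equiv> \<lambda>x. Aq m \<alpha> (Gof x) i" and "b \<equiv> \<lambda>x. Bq m \<alpha> (Gof x) i"
    and "K \<equiv> {x \<in> space PP. obsKL \<nu> f i x > ereal \<epsilon>}"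
  shows "(\<integral>\<^sup>+ x. ennreal (f x * a x) \<partial>PP)
      \<le> ennreal (exp \<epsilon>) * (\<integral>\<^sup>+ x. ennreal (f x * b x) \<partial>PP) + (\<integral>\<^sup>+ x. ennreal (f x * indicator K x) \<partial>PP)"
proof -
  define B where "B = {x \<in> space PP. (\<integral>\<^sup>+ w. ennreal (f (x(i := w))) \<partial>NN) = 0
                 \<or> (\<integral>\<^sup>+ w. ennreal (f (x(i := w))) \<partial>NN) = \<infinity>}"
  have efm: "(\<lambda>x. ennreal (f x)) \<in> borel_measurable PP"
    using measurable_compose[OF fm measurable_ennreal] .
  have Zm: "(\<lambda>x. \<integral>\<^sup>+ w. ennreal (f (x(i := w))) \<partial>NN) \<in> borel_measurable PP"
    by (rule nnZ_meas[OF i efm])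
  have Bs: "B \<in> sets PP" unfolding B_def using Zm by measurable
  have KLm: "obsKL \<nu> f i \<in> borel_measurable PP" by (rule obsKL_meas[OF i])
  have Ks: "K \<in> sets PP" unfolding K_def using KLm by measurable
  have Gm: "(\<lambda>x. Gof x j) \<in> borel_measurable PP" for j by (rule Gof_meas_all[OF nu_sets])
  have am: "a \<in> borel_measurable PP" unfolding a_def by (rule AqBq_meas(1)[OF Gm])
  have bm: "b \<in> borel_measurable PP" unfolding b_def by (rule AqBq_meas(2)[OF Gm])
  have fs: "(\<lambda>x. f (swap_at i x)) \<in> borel_measurable PP"
    using measurable_comp[OF swap_meas[OF i] fm] by (simp add: comp_def)
  have a01: "0 \<le> a x" "a x \<le> 1" for x unfolding a_def by (simp_all add: Aq_nonneg Aq_le1)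
  have b0: "0 \<le> b x" for x unfolding b_def by (simp add: Bq_nonneg)
  have ab: "a x = b (swap_at i x)" for x
    unfolding a_def b_def Gof_swap by (rule Aq_swap)
  have pw: "f x * a x \<le> exp \<epsilon> * (f (swap_at i x) * a x) + f x * indicator K x + f x * indicator B x"
    if x: "x \<in> space PP" for x
  proof -
    have fa: "f x * a x \<le> f x" using a01[of x] f0[of x] by (simp add: mult_left_le)
    have nn: "0 \<le> exp \<epsilon> * (f (swap_at i x) * a x)" using a01[of x] f0 by simp
    have nn2: "0 \<le> f x * indicator K x" "0 \<le> f x * indicator B x" using f0[of x] by (simp_all add: indicator_def)
    show ?thesis
    proof (cases "x \<in> K \<or> x \<in> B")
      case True
      then show ?thesis using fa nn nn2 by (auto simp: indicator_def)
    next
      case False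
      then have nz: "(\<integral>\<^sup>+ w. ennreal (f (x(i := w))) \<partial>NN) \<noteq> 0"
        and ni: "(\<integral>\<^sup>+ w. ennreal (f (x(i := w))) \<partial>NN) \<noteq> \<infinity>"
        and kl: "obsKL \<nu> f i x \<le> ereal \<epsilon>"
        using x unfolding B_def K_def by auto
      have "f x \<le> exp \<epsilon> * f (swap_at i x)" by (rule obsKL_good[OF i x nz ni eps kl])
      then have "f x * a x \<le> exp \<epsilon> * f (swap_at i x) * a x"
        using a01[of x] by (simp add: mult_right_mono)
      then show ?thesis using nn2 by (simp add: mult.assoc)
    qed
  qed
  have "(\<integral>\<^sup>+ x. ennreal (f x * a x) \<partial>PP)
      \<le> (\<integral>\<^sup>+ x. ennreal (exp \<epsilon>) * ennreal (f (swap_at i x) * a x) + ennreal (f x * indicator K x)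
             + ennreal (f x * indicator B x) \<partial>PP)"
  proof (rule nn_integral_mono)
    fix x assume x: "x \<in> space PP"
    have nn: "0 \<le> f (swap_at i x) * a x" using a01[of x] f0 by simp
    have nn2: "0 \<le> f x * indicator K x" "0 \<le> f x * indicator B x" using f0[of x] by (simp_all add: indicator_def)
    have "ennreal (f x * a x) \<le> ennreal (exp \<epsilon> * (f (swap_at i x) * a x) + f x * indicator K x + f x * indicator B x)"
      by (rule ennreal_leI[OF pw[OF x]])
    also have "\<dots> = ennreal (exp \<epsilon>) * ennreal (f (swap_at i x) * a x) + ennreal (f x * indicator K x)
             + ennreal (f x * indicator B x)"
      using nn nn2 by (simp add: ennreal_plus ennreal_mult)
    finally show "ennreal (f x * a x) \<le> ennreal (exp \<epsilon>) * ennreal (f (swap_at i x) * a x) + ennreal (f x * indicator K x)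
             + ennreal (f x * indicator B x)" .
  qed
  also have "\<dots> = ennreal (exp \<epsilon>) * (\<integral>\<^sup>+ x. ennreal (f (swap_at i x) * a x) \<partial>PP)
       + (\<integral>\<^sup>+ x. ennreal (f x * indicator K x) \<partial>PP) + (\<integral>\<^sup>+ x. ennreal (f x * indicator B x) \<partial>PP)"
  proof -
    note [measurable] = fs am Ks Bs
    have m0: "(\<lambda>x. ennreal (f (swap_at i x) * a x)) \<in> borel_measurable PP" by measurable
    have m1: "(\<lambda>x. ennreal (exp \<epsilon>) * ennreal (f (swap_at i x) * a x)) \<in> borel_measurable PP" by measurable
    have m2: "(\<lambda>x. ennreal (f x * indicator K x)) \<in> borel_measurable PP" by measurable
    have m3: "(\<lambda>x. ennreal (f x * indicator B x)) \<in> borel_measurable PP" by measurable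
    show ?thesis
      unfolding nn_integral_add[OF borel_measurable_add[OF m1 m2] m3] nn_integral_add[OF m1 m2]
        nn_integral_cmult[OF m0] ..
  qed
  also have "(\<integral>\<^sup>+ x. ennreal (f x * indicator B x) \<partial>PP) = 0"
  proof -
    have "(\<integral>\<^sup>+ x. ennreal (f x * indicator B x) \<partial>PP) = (\<integral>\<^sup>+ x. ennreal (f x) * indicator B x \<partial>PP)"
      by (rule nn_integral_cong) (simp add: indicator_def)
    also have "\<dots> = 0" unfolding B_def by (rule bad_null[OF i fin])
    finally show ?thesis .
  qed
  also have "(\<integral>\<^sup>+ x. ennreal (f (swap_at i x) * a x) \<partial>PP) = (\<integral>\<^sup>+ x. ennreal (f x * b x) \<partial>PP)"
  proof -
    have gm: "(\<lambda>x. ennreal (f x * b x)) \<in> borel_measurable PP" using bm by measurable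
    have "(\<integral>\<^sup>+ x. ennreal (f (swap_at i x) * a x) \<partial>PP) = (\<integral>\<^sup>+ x. ennreal (f (swap_at i x) * b (swap_at i x)) \<partial>PP)"
      by (simp add: ab)
    also have "\<dots> = (\<integral>\<^sup>+ x. ennreal (f x * b x) \<partial>PP)"
      by (rule swap_inv[OF i gm])
    finally show ?thesis .
  qed
  finally show ?thesis by simp
qed

end

lemma card_filter_map:
  "card {i \<in> {1..m}. P (e i)} = length (filter P (map e [1..<m+1]))"
proof -
  have "length (filter P (map e [1..<m+1])) = length (filter (P \<circ> e) [1..<m+1])"
    by (simp add: filter_map)
  also have "\<dots> = card (set (filter (P \<circ> e) [1..<m+1]))"
    by (rule distinct_card[symmetric]) simp
  also have "set (filter (P \<circ> e) [1..<m+1]) = {i \<in> {1..m}. P (e i)}" by auto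
  finally show ?thesis by simp
qed

lemma eord_count:
  assumes k: "1 \<le> k" "k \<le> m"
  shows "k \<le> card {i \<in> {1..m}. e i \<ge> eord m e k}"
proof -
  define L where "L = map e [1..<m+1]"
  define xs where "xs = rev (sort L)"
  define c where "c = eord m e k"
  have c: "c = xs ! (k - 1)" unfolding c_def eord_def xs_def L_def ..
  have len: "length xs = m" unfolding xs_def L_def by simp
  have ms: "mset xs = mset L" unfolding xs_def by simp
  have ge: "xs ! j \<ge> c" if "j < k" for j
  proof -
    have s: "sorted (sort L)" by simp
    have ls: "length (sort L) = m" using len unfolding xs_def by simp
    have "xs ! j = sort L ! (m - 1 - j)" unfolding xs_def using that k ls by (simp add: rev_nth)
    moreover have "xs ! (k - 1) = sort L ! (m - 1 - (k - 1))" unfolding xs_def using k ls by (simp add: rev_nth)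
    moreover have "sort L ! (m - 1 - (k - 1)) \<le> sort L ! (m - 1 - j)"
      using s that k ls by (intro sorted_nth_mono) auto
    ultimately show ?thesis using c by simp
  qed
  have "card {i \<in> {1..m}. e i \<ge> c} = length (filter (\<lambda>v. v \<ge> c) L)"
    unfolding L_def by (rule card_filter_map)
  also have "\<dots> = length (filter (\<lambda>v. v \<ge> c) xs)"
    using ms by (metis mset_filter size_mset)
  also have "\<dots> \<ge> length (filter (\<lambda>v. v \<ge> c) (take k xs))"
  proof -
    have "xs = take k xs @ drop k xs" by simp
    then have "length (filter (\<lambda>v. v \<ge> c) xs) = length (filter (\<lambda>v. v \<ge> c) (take k xs)) + length (filter (\<lambda>v. v \<ge> c) (drop k xs))"
      by (metis filter_append length_append)
    then show ?thesis by simp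
  qed
  also have "filter (\<lambda>v. v \<ge> c) (take k xs) = take k xs"
    using ge by (auto simp: filter_id_conv in_set_conv_nth)
  also have "length (take k xs) = k" using len k by simp
  finally show ?thesis unfolding c_def by simp
qed

lemma fdp_le:
  fixes e :: "nat \<Rightarrow> real"
  assumes a: "\<alpha> > 0" and H: "H0 \<subseteq> {1..m}" and e0: "\<And>i. e i \<ge> 0"
  shows "real (card (eBH m \<alpha> e \<inter> H0)) / real (max (card (eBH m \<alpha> e)) 1)
         \<le> \<alpha> / real m * (\<Sum>i\<in>H0. e i)"
proof (cases "eBH_khat_set m \<alpha> e = {}")
  case True
  then show ?thesis using a e0 by (simp add: eBH_def sum_nonneg)
next
  case False
  define K where "K = eBH_khat_set m \<alpha> e"
  define k where "k = Max K"
  define R where "R = {i \<in> {1..m}. e i \<ge> eord m e k}"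
  have fK: "finite K" unfolding K_def eBH_khat_set_def by simp
  have kK: "k \<in> K" unfolding k_def using fK False K_def by simp
  then have k1: "1 \<le> k" "k \<le> m" and kc: "real k * eord m e k / real m \<ge> 1 / \<alpha>"
    unfolding K_def eBH_khat_set_def by auto
  have m0: "real m > 0" using k1 by simp
  have R: "eBH m \<alpha> e = R" unfolding eBH_def R_def k_def K_def using False by simp
  have cR: "k \<le> card R" unfolding R_def by (rule eord_count[OF k1])
  have fR: "finite R" unfolding R_def by simp
  have per: "1 / real (card R) \<le> \<alpha> / real m * e i" if "i \<in> R" for i
  proof -
    have "1 / real (card R) \<le> 1 / real k" using cR k1 by (simp add: frac_le)
    also have "\<dots> \<le> \<alpha> / real m * eord m e k"
    proof -
      have "1 \<le> \<alpha> * (real k * eord m e k / real m)" using kc a by (simp add: field_simps)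
      then have "1 \<le> real k * (\<alpha> / real m * eord m e k)" by (simp add: field_simps)
      then show ?thesis using k1 by (simp add: field_simps)
    qed
    also have "\<dots> \<le> \<alpha> / real m * e i" using that a m0 unfolding R_def
      by (intro mult_left_mono) auto
    finally show ?thesis .
  qed
  have cpos: "card R \<ge> 1" using cR k1 by simp
  have "real (card (R \<inter> H0)) / real (max (card R) 1) = (\<Sum>i\<in>R \<inter> H0. 1 / real (card R))"
    using cpos by (simp add: max_def)
  also have "\<dots> \<le> (\<Sum>i\<in>R \<inter> H0. \<alpha> / real m * e i)"
    by (intro sum_mono per) auto
  also have "\<dots> \<le> (\<Sum>i\<in>H0. \<alpha> / real m * e i)"
    using H a e0 m0 by (intro sum_mono2) (auto intro: finite_subset)
  also have "\<dots> = \<alpha> / real m * (\<Sum>i\<in>H0. e i)" by (simp add: sum_distrib_left)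
  finally show ?thesis unfolding R .
qed

lemma Aq_cong:
  assumes "\<And>j. j \<in> {1..m} \<Longrightarrow> G j = G' j" and i: "i \<in> {1..m}"
  shows "Aq m \<alpha> G i = Aq m \<alpha> G' i"
proof -
  have T: "Tl m \<alpha> G i = Tl m \<alpha> G' i"
    unfolding Tl_def by (rule tau_cong) (use assms in auto)
  have S: "{j \<in> {1..m} - {i}. ereal (G j) \<le> - Tl m \<alpha> G' i} = {j \<in> {1..m} - {i}. ereal (G' j) \<le> - Tl m \<alpha> G' i}"
    using assms by auto
  show ?thesis unfolding Aq_def S T using assms(1)[OF i] by simp
qed

context kset begin

lemma key_bound:
  fixes M :: "'w measure" and X :: "'w \<Rightarrow> nat \<Rightarrow> real \<times> real" and \<alpha> \<epsilon> :: real
  assumes P: "prob_space M" and a: "\<alpha> > 0" and H: "H0 \<subseteq> {1..m}" and eps: "\<epsilon> \<ge> 0"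
    and dist: "distributed M PP X (\<lambda>x. ennreal (f x))"
  shows "(\<integral>\<^sup>+ \<omega>. (\<Sum>i\<in>H0. ennreal (Aq m \<alpha> (Gof (X \<omega>)) i)) \<partial>M)
      \<le> ennreal (exp \<epsilon> + (\<Sum>i\<in>H0. measure M {\<omega> \<in> space M. obsKL \<nu> f i (X \<omega>) > ereal \<epsilon>}))"
proof -
  interpret prob_space M by (rule P)
  have Xm[measurable]: "X \<in> measurable M PP" using dist by (simp add: distributed_def)
  have D: "distr M PP X = density PP (\<lambda>x. ennreal (f x))" using dist by (simp add: distributed_def)
  have efm: "(\<lambda>x. ennreal (f x)) \<in> borel_measurable PP"
    using measurable_compose[OF fm measurable_ennreal] .
  have transfer: "(\<integral>\<^sup>+ \<omega>. h (X \<omega>) \<partial>M) = (\<integral>\<^sup>+ x. ennreal (f x) * h x \<partial>PP)"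
    if hm: "h \<in> borel_measurable PP" for h
  proof -
    have "(\<integral>\<^sup>+ x. h x \<partial>distr M PP X) = (\<integral>\<^sup>+ \<omega>. h (X \<omega>) \<partial>M)"
      by (rule nn_integral_distr[OF Xm]) (simp only: measurable_distr_eq1 hm)
    then have "(\<integral>\<^sup>+ \<omega>. h (X \<omega>) \<partial>M) = (\<integral>\<^sup>+ x. h x \<partial>distr M PP X)" by simp
    also have "\<dots> = (\<integral>\<^sup>+ x. ennreal (f x) * h x \<partial>PP)"
      unfolding D by (rule nn_integral_density[OF efm hm])
    finally show ?thesis .
  qed
  have fin: "(\<integral>\<^sup>+ x. ennreal (f x) \<partial>PP) \<noteq> \<infinity>"
  proof -
    have "(\<integral>\<^sup>+ x. ennreal (f x) \<partial>PP) = (\<integral>\<^sup>+ x. ennreal (f x) * 1 \<partial>PP)" by simp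
    also have "\<dots> = (\<integral>\<^sup>+ \<omega>. 1 \<partial>M)" using transfer[of "\<lambda>_. 1"] by simp
    also have "\<dots> = 1" by (simp add: emeasure_space_1)
    finally show ?thesis by simp
  qed
  have Gm: "(\<lambda>x. Gof x j) \<in> borel_measurable PP" for j by (rule Gof_meas_all[OF nu_sets])
  have am: "(\<lambda>x. Aq m \<alpha> (Gof x) i) \<in> borel_measurable PP" for i by (rule AqBq_meas(1)[OF Gm])
  have bm: "(\<lambda>x. Bq m \<alpha> (Gof x) i) \<in> borel_measurable PP" for i by (rule AqBq_meas(2)[OF Gm])
  define Pr where "Pr i = measure M {\<omega> \<in> space M. obsKL \<nu> f i (X \<omega>) > ereal \<epsilon>}" for i
  have per: "(\<integral>\<^sup>+ \<omega>. ennreal (Aq m \<alpha> (Gof (X \<omega>)) i) \<partial>M)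
     \<le> ennreal (exp \<epsilon>) * (\<integral>\<^sup>+ \<omega>. ennreal (Bq m \<alpha> (Gof (X \<omega>)) i) \<partial>M) + ennreal (Pr i)"
    if i: "i \<in> H0" for i
  proof -
    have iS: "i \<in> {1..m}" using i H by auto
    define K where "K = {x \<in> space PP. obsKL \<nu> f i x > ereal \<epsilon>}"
    have KLm: "obsKL \<nu> f i \<in> borel_measurable PP" by (rule obsKL_meas[OF iS])
    have Ks: "K \<in> sets PP" unfolding K_def using KLm by measurable
    have eA: "(\<integral>\<^sup>+ \<omega>. ennreal (Aq m \<alpha> (Gof (X \<omega>)) i) \<partial>M) = (\<integral>\<^sup>+ x. ennreal (f x * Aq m \<alpha> (Gof x) i) \<partial>PP)"
      using transfer[of "\<lambda>x. ennreal (Aq m \<alpha> (Gof x) i)"] am[of i] f0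
      by (simp add: ennreal_mult Aq_nonneg)
    have eB: "(\<integral>\<^sup>+ \<omega>. ennreal (Bq m \<alpha> (Gof (X \<omega>)) i) \<partial>M) = (\<integral>\<^sup>+ x. ennreal (f x * Bq m \<alpha> (Gof x) i) \<partial>PP)"
      using transfer[of "\<lambda>x. ennreal (Bq m \<alpha> (Gof x) i)"] bm[of i] f0
      by (simp add: ennreal_mult Bq_nonneg)
    have eK: "(\<integral>\<^sup>+ x. ennreal (f x * indicator K x) \<partial>PP) = ennreal (Pr i)"
    proof -
      have "(\<integral>\<^sup>+ x. ennreal (f x * indicator K x) \<partial>PP) = (\<integral>\<^sup>+ x. ennreal (f x) * indicator K x \<partial>PP)"
        by (rule nn_integral_cong) (simp add: indicator_def)
      also have "\<dots> = (\<integral>\<^sup>+ \<omega>. indicator K (X \<omega>) \<partial>M)"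
        using transfer[of "indicator K"] Ks by simp
      also have "\<dots> = (\<integral>\<^sup>+ \<omega>. indicator (X -` K \<inter> space M) \<omega> \<partial>M)"
        by (rule nn_integral_cong) (simp add: indicator_def)
      also have "\<dots> = emeasure M (X -` K \<inter> space M)"
        using measurable_sets[OF Xm Ks] by simp
      also have "X -` K \<inter> space M = {\<omega> \<in> space M. obsKL \<nu> f i (X \<omega>) > ereal \<epsilon>}"
        unfolding K_def using measurable_space[OF Xm] by auto
      also have "emeasure M \<dots> = ennreal (Pr i)" unfolding Pr_def by (simp add: emeasure_eq_measure)
      finally show ?thesis .
    qed
    show ?thesis
      unfolding eA eB eK[symmetric] K_def
      by (rule main_P[OF iS eps fin])
  qed
  have bsum: "(\<integral>\<^sup>+ \<omega>. (\<Sum>i\<in>H0. ennreal (Bq m \<alpha> (Gof (X \<omega>)) i)) \<partial>M) \<le> 1"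
  proof -
    have "(\<integral>\<^sup>+ \<omega>. (\<Sum>i\<in>H0. ennreal (Bq m \<alpha> (Gof (X \<omega>)) i)) \<partial>M) \<le> (\<integral>\<^sup>+ \<omega>. 1 \<partial>M)"
    proof (rule nn_integral_mono)
      fix \<omega>
      have fH: "finite H0" using H finite_subset by blast
      have "(\<Sum>i\<in>H0. ennreal (Bq m \<alpha> (Gof (X \<omega>)) i)) = ennreal (\<Sum>i\<in>H0. Bq m \<alpha> (Gof (X \<omega>)) i)"
        by (simp add: Bq_nonneg sum_ennreal)
      also have "\<dots> \<le> ennreal (\<Sum>i\<in>{1..m}. Bq m \<alpha> (Gof (X \<omega>)) i)"
        by (intro ennreal_leI sum_mono2 H) (auto simp: Bq_nonneg)
      also have "\<dots> \<le> 1" using sum_Bq[OF a] by (simp add: ennreal_le_1)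
      finally show "(\<Sum>i\<in>H0. ennreal (Bq m \<alpha> (Gof (X \<omega>)) i)) \<le> 1" .
    qed
    also have "\<dots> = 1" by (simp add: emeasure_space_1)
    finally show ?thesis .
  qed
  have amM: "(\<lambda>\<omega>. ennreal (Aq m \<alpha> (Gof (X \<omega>)) i)) \<in> borel_measurable M" for i
    using measurable_compose[OF Xm am[of i]] by measurable
  have bmM: "(\<lambda>\<omega>. ennreal (Bq m \<alpha> (Gof (X \<omega>)) i)) \<in> borel_measurable M" for i
    using measurable_compose[OF Xm bm[of i]] by measurable
  have "(\<integral>\<^sup>+ \<omega>. (\<Sum>i\<in>H0. ennreal (Aq m \<alpha> (Gof (X \<omega>)) i)) \<partial>M)
      = (\<Sum>i\<in>H0. (\<integral>\<^sup>+ \<omega>. ennreal (Aq m \<alpha> (Gof (X \<omega>)) i) \<partial>M))"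
    by (rule nn_integral_sum) (simp add: amM)
  also have "\<dots> \<le> (\<Sum>i\<in>H0. ennreal (exp \<epsilon>) * (\<integral>\<^sup>+ \<omega>. ennreal (Bq m \<alpha> (Gof (X \<omega>)) i) \<partial>M) + ennreal (Pr i))"
    by (rule sum_mono) (rule per)
  also have "\<dots> = ennreal (exp \<epsilon>) * (\<integral>\<^sup>+ \<omega>. (\<Sum>i\<in>H0. ennreal (Bq m \<alpha> (Gof (X \<omega>)) i)) \<partial>M)
        + (\<Sum>i\<in>H0. ennreal (Pr i))"
    by (simp add: sum.distrib sum_distrib_left nn_integral_sum bmM)
  also have "\<dots> \<le> ennreal (exp \<epsilon>) * 1 + (\<Sum>i\<in>H0. ennreal (Pr i))"
    by (intro add_mono mult_left_mono bsum) auto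
  also have "\<dots> = ennreal (exp \<epsilon> + (\<Sum>i\<in>H0. Pr i))"
  proof -
    have Pr0: "0 \<le> Pr i" for i unfolding Pr_def by simp
    have "(\<Sum>i\<in>H0. ennreal (Pr i)) = ennreal (sum Pr H0)" using Pr0 by simp
    then show ?thesis using Pr0 by (simp add: ennreal_plus sum_nonneg)
  qed
  finally show ?thesis unfolding Pr_def .
qed

end


lemma integral_le_from_nn:
  fixes g :: "'a \<Rightarrow> real"
  assumes g0: "\<And>\<omega>. g \<omega> \<ge> 0" and le: "(\<integral>\<^sup>+ \<omega>. ennreal (g \<omega>) \<partial>M) \<le> ennreal c" and c: "c \<ge> 0"
  shows "integral\<^sup>L M g \<le> c"
proof (cases "integrable M g")
  case True
  have "(\<integral>\<^sup>+ \<omega>. ennreal (g \<omega>) \<partial>M) = ennreal (integral\<^sup>L M g)"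
    by (rule nn_integral_eq_integral[OF True]) (simp add: g0)
  then have "ennreal (integral\<^sup>L M g) \<le> ennreal c" using le by simp
  then show ?thesis using c by (simp add: ennreal_le_iff)
next
  case False then show ?thesis by (simp add: not_integrable_integral_eq c)
qed

theorem theorem3:
  fixes M :: "'w measure" and \<nu> :: "real measure"
    and U U0 :: "'w \<Rightarrow> nat \<Rightarrow> real"
    and m :: nat and H0 :: "nat set" and \<alpha> :: real
    and f :: "(nat \<Rightarrow> real \<times> real) \<Rightarrow> real"
  assumes "prob_space M"
    and "sigma_finite_measure \<nu>" and "sets \<nu> = sets borel"
    and "0 < \<alpha>" and "\<alpha> < 1"
    and "H0 \<subseteq> {1..m}"
    and "\<And>x. f x \<ge> 0"
    and "distributed M (PiM {1..m} (\<lambda>_. \<nu> \<Otimes>\<^sub>M \<nu>))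
           (\<lambda>\<omega>. \<lambda>i\<in>{1..m}. (U \<omega> i, U0 \<omega> i)) (\<lambda>x. ennreal (f x))"
  defines "e \<equiv> (\<lambda>\<omega> i. evalue m \<alpha> (\<lambda>j. statG (U \<omega> j) (U0 \<omega> j)) i)"
    and "KL \<equiv> (\<lambda>i \<omega>. obsKL \<nu> f i (\<lambda>j\<in>{1..m}. (U \<omega> j, U0 \<omega> j)))"
  shows "prob_space.expectation M (\<lambda>\<omega>. \<Sum>i\<in>H0. e \<omega> i)
           \<le> (INF \<epsilon>\<in>{0..}. real m * (exp \<epsilon> +
                 (\<Sum>i\<in>H0. measure M {\<omega> \<in> space M. KL i \<omega> > ereal \<epsilon>})))
       \<and> prob_space.expectation M
           (\<lambda>\<omega>. real (card (eBH m \<alpha> (e \<omega>) \<inter> H0)) / real (max (card (eBH m \<alpha> (e \<omega>))) 1))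
           \<le> (INF \<epsilon>\<in>{0..}. \<alpha> * (exp \<epsilon> +
                 (\<Sum>i\<in>H0. measure M {\<omega> \<in> space M. KL i \<omega> > ereal \<epsilon>})))"
proof -
  note P = assms(1) and sf = assms(2) and nus = assms(3) and a = assms(4) and H = assms(6)
    and f0 = assms(7) and dist = assms(8)
  define X where "X = (\<lambda>\<omega>. \<lambda>i\<in>{1..m}. (U \<omega> i, U0 \<omega> i))"
  let ?PP = "PiM {1..m} (\<lambda>_. \<nu> \<Otimes>\<^sub>M \<nu>)"
  have dist': "distributed M ?PP X (\<lambda>x. ennreal (f x))" using dist unfolding X_def .
  have efm: "(\<lambda>x. ennreal (f x)) \<in> borel_measurable ?PP" by (rule distributed_borel_measurable[OF dist'])
  have "(\<lambda>x. enn2real (ennreal (f x))) \<in> borel_measurable ?PP"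
    by (rule borel_measurable_enn2real[OF efm])
  moreover have "(\<lambda>x. enn2real (ennreal (f x))) = f" using f0 by (simp add: fun_eq_iff)
  ultimately have fm: "f \<in> borel_measurable ?PP" by simp
  interpret kset \<nu> m f by (rule kset.intro[OF sf nus f0 fm])
  have Xm: "X \<in> measurable M ?PP" by (rule distributed_measurable[OF dist'])
  have KLX: "KL i \<omega> = obsKL \<nu> f i (X \<omega>)" for i \<omega> unfolding KL_def X_def ..
  define G where "G \<omega> = (\<lambda>j. statG (U \<omega> j) (U0 \<omega> j))" for \<omega>
  have GX: "Gof (X \<omega>) j = G \<omega> j" if "j \<in> {1..m}" for \<omega> j
    using that unfolding Gof_def X_def G_def by simp
  have AqX: "Aq m \<alpha> (G \<omega>) i = Aq m \<alpha> (Gof (X \<omega>)) i" if "i \<in> {1..m}" for \<omega> i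
    by (rule Aq_cong[OF _ that]) (simp add: GX)
  have e0: "e \<omega> i \<ge> 0" for \<omega> i unfolding e_def evalue_def by simp
  have eA: "e \<omega> i \<le> real m * Aq m \<alpha> (Gof (X \<omega>)) i" if "i \<in> H0" for \<omega> i
  proof -
    have iS: "i \<in> {1..m}" using that H by auto
    have "e \<omega> i \<le> real m * Aq m \<alpha> (G \<omega>) i" unfolding e_def G_def by (rule evalue_le_Aq[OF iS])
    then show ?thesis using AqX[OF iS] by simp
  qed
  have Gm: "(\<lambda>x. Gof x j) \<in> borel_measurable ?PP" for j by (rule Gof_meas_all[OF nus])
  have am: "(\<lambda>x. Aq m \<alpha> (Gof x) i) \<in> borel_measurable ?PP" for i by (rule AqBq_meas(1)[OF Gm])
  have amM: "(\<lambda>\<omega>. ennreal (Aq m \<alpha> (Gof (X \<omega>)) i)) \<in> borel_measurable M" for i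
    using measurable_compose[OF Xm am[of i]] by measurable
  have sM: "(\<lambda>\<omega>. \<Sum>i\<in>H0. ennreal (Aq m \<alpha> (Gof (X \<omega>)) i)) \<in> borel_measurable M"
    using amM by (intro borel_measurable_sum) auto
  have fH: "finite H0" using H finite_subset by blast
  define B where "B \<epsilon> = exp \<epsilon> + (\<Sum>i\<in>H0. measure M {\<omega> \<in> space M. KL i \<omega> > ereal \<epsilon>})" for \<epsilon>
  have B0: "B \<epsilon> \<ge> 0" for \<epsilon> unfolding B_def by (intro add_nonneg_nonneg sum_nonneg) auto
  have key: "(\<integral>\<^sup>+ \<omega>. (\<Sum>i\<in>H0. ennreal (Aq m \<alpha> (Gof (X \<omega>)) i)) \<partial>M) \<le> ennreal (B \<epsilon>)"
    if eps: "\<epsilon> \<ge> 0" for \<epsilon>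
    unfolding B_def KLX by (rule key_bound[OF P a H eps dist'])
  have pA: "(\<integral>\<^sup>+ \<omega>. ennreal (c * (\<Sum>i\<in>H0. Aq m \<alpha> (Gof (X \<omega>)) i)) \<partial>M) \<le> ennreal (c * B \<epsilon>)"
    if eps: "\<epsilon> \<ge> 0" and c: "c \<ge> 0" for \<epsilon> c
  proof -
    have "(\<integral>\<^sup>+ \<omega>. ennreal (c * (\<Sum>i\<in>H0. Aq m \<alpha> (Gof (X \<omega>)) i)) \<partial>M)
        = (\<integral>\<^sup>+ \<omega>. ennreal c * (\<Sum>i\<in>H0. ennreal (Aq m \<alpha> (Gof (X \<omega>)) i)) \<partial>M)"
      using c by (intro nn_integral_cong) (simp add: ennreal_mult Aq_nonneg sum_nonneg)
    also have "\<dots> = ennreal c * (\<integral>\<^sup>+ \<omega>. (\<Sum>i\<in>H0. ennreal (Aq m \<alpha> (Gof (X \<omega>)) i)) \<partial>M)"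
      by (rule nn_integral_cmult[OF sM])
    also have "\<dots> \<le> ennreal c * ennreal (B \<epsilon>)" by (intro mult_left_mono key[OF eps]) auto
    also have "\<dots> = ennreal (c * B \<epsilon>)" by (rule ennreal_mult[symmetric, OF c B0])
    finally show ?thesis .
  qed
  have partA: "prob_space.expectation M (\<lambda>\<omega>. \<Sum>i\<in>H0. e \<omega> i) \<le> real m * B \<epsilon>" if eps: "\<epsilon> \<ge> 0" for \<epsilon>
  proof (rule integral_le_from_nn)
    show "0 \<le> (\<Sum>i\<in>H0. e \<omega> i)" for \<omega> by (simp add: e0 sum_nonneg)
    show "0 \<le> real m * B \<epsilon>" using B0 by simp
    have "(\<integral>\<^sup>+ \<omega>. ennreal (\<Sum>i\<in>H0. e \<omega> i) \<partial>M) \<le> (\<integral>\<^sup>+ \<omega>. ennreal (real m * (\<Sum>i\<in>H0. Aq m \<alpha> (Gof (X \<omega>)) i)) \<partial>M)"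
      by (intro nn_integral_mono ennreal_leI) (simp only: sum_distrib_left, rule sum_mono, rule eA, assumption)
    also have "\<dots> \<le> ennreal (real m * B \<epsilon>)" by (rule pA[OF eps]) simp
    finally show "(\<integral>\<^sup>+ \<omega>. ennreal (\<Sum>i\<in>H0. e \<omega> i) \<partial>M) \<le> ennreal (real m * B \<epsilon>)" .
  qed
  define FDP where "FDP \<omega> = real (card (eBH m \<alpha> (e \<omega>) \<inter> H0)) / real (max (card (eBH m \<alpha> (e \<omega>))) 1)" for \<omega>
  have partB: "prob_space.expectation M FDP \<le> \<alpha> * B \<epsilon>" if eps: "\<epsilon> \<ge> 0" for \<epsilon>
  proof (rule integral_le_from_nn)
    show "0 \<le> FDP \<omega>" for \<omega> unfolding FDP_def by simp
    show "0 \<le> \<alpha> * B \<epsilon>" using B0 a by simp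
    have c0: "\<alpha> / real m * real m \<ge> 0" using a by simp
    have pw: "FDP \<omega> \<le> \<alpha> / real m * real m * (\<Sum>i\<in>H0. Aq m \<alpha> (Gof (X \<omega>)) i)" for \<omega>
    proof -
      have "FDP \<omega> \<le> \<alpha> / real m * (\<Sum>i\<in>H0. e \<omega> i)"
        unfolding FDP_def by (rule fdp_le[OF a H]) (simp add: e0)
      also have "\<dots> \<le> \<alpha> / real m * (\<Sum>i\<in>H0. real m * Aq m \<alpha> (Gof (X \<omega>)) i)"
        using a by (intro mult_left_mono sum_mono eA) auto
      also have "(\<Sum>i\<in>H0. real m * Aq m \<alpha> (Gof (X \<omega>)) i) = real m * (\<Sum>i\<in>H0. Aq m \<alpha> (Gof (X \<omega>)) i)"
        by (rule sum_distrib_left[symmetric])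
      finally show ?thesis by (simp only: mult.assoc)
    qed
    have "(\<integral>\<^sup>+ \<omega>. ennreal (FDP \<omega>) \<partial>M) \<le> (\<integral>\<^sup>+ \<omega>. ennreal (\<alpha> / real m * real m * (\<Sum>i\<in>H0. Aq m \<alpha> (Gof (X \<omega>)) i)) \<partial>M)"
      by (intro nn_integral_mono ennreal_leI pw)
    also have "\<dots> \<le> ennreal (\<alpha> / real m * real m * B \<epsilon>)" by (rule pA[OF eps c0])
    also have "\<dots> \<le> ennreal (\<alpha> * B \<epsilon>)"
    proof (intro ennreal_leI mult_right_mono B0)
      show "\<alpha> / real m * real m \<le> \<alpha>" using a by (cases "m = 0") auto
    qed
    finally show "(\<integral>\<^sup>+ \<omega>. ennreal (FDP \<omega>) \<partial>M) \<le> ennreal (\<alpha> * B \<epsilon>)" .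
  qed
  show ?thesis
  proof
    show "prob_space.expectation M (\<lambda>\<omega>. \<Sum>i\<in>H0. e \<omega> i)
           \<le> (INF \<epsilon>\<in>{0..}. real m * (exp \<epsilon> +
                 (\<Sum>i\<in>H0. measure M {\<omega> \<in> space M. KL i \<omega> > ereal \<epsilon>})))"
    proof (rule cINF_greatest)
      show "{0::real..} \<noteq> {}" by auto
    next
      fix \<epsilon> :: real assume "\<epsilon> \<in> {0..}"
      then have "\<epsilon> \<ge> 0" by simp
      from partA[OF this] show "prob_space.expectation M (\<lambda>\<omega>. \<Sum>i\<in>H0. e \<omega> i)
           \<le> real m * (exp \<epsilon> + (\<Sum>i\<in>H0. measure M {\<omega> \<in> space M. KL i \<omega> > ereal \<epsilon>}))"
        unfolding B_def .
    qed
    show "prob_space.expectation M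
           (\<lambda>\<omega>. real (card (eBH m \<alpha> (e \<omega>) \<inter> H0)) / real (max (card (eBH m \<alpha> (e \<omega>))) 1))
           \<le> (INF \<epsilon>\<in>{0..}. \<alpha> * (exp \<epsilon> +
                 (\<Sum>i\<in>H0. measure M {\<omega> \<in> space M. KL i \<omega> > ereal \<epsilon>})))"
    proof (rule cINF_greatest)
      show "{0::real..} \<noteq> {}" by auto
    next
      fix \<epsilon> :: real assume "\<epsilon> \<in> {0..}"
      then have "\<epsilon> \<ge> 0" by simp
      from partB[OF this] show "prob_space.expectation M
           (\<lambda>\<omega>. real (card (eBH m \<alpha> (e \<omega>) \<inter> H0)) / real (max (card (eBH m \<alpha> (e \<omega>))) 1))
           \<le> \<alpha> * (exp \<epsilon> + (\<Sum>i\<in>H0. measure M {\<omega> \<in> space M. KL i \<omega> > ereal \<epsilon>}))"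
        unfolding B_def FDP_def .
    qed
  qed
qed

end
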